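(* Let $I_0$ be an interval and let $\{f_k\}_{k\ge0}$ be a $C^1$-uniformly equicontinuous and $C^1$-uniformly bounded sequence of $C^1$ maps $f_k:I_0\to I_0$ with $p=\sup_k\#\mathcal{C}_k<\infty$. Assume that for Lebesgue almost every $x\in I_0$, $$\liminf_{n\to\infty}\frac1n\log|Df^n(x)|\ge\lambda>0.$$ Then, given $\gamma>0$, there exists $\varepsilon>0$ such that for Lebesgue almost every $x\in I_0$, $$\limsup_{n\to\infty}\frac1n\sum_{j=0}^{n-1}\chi_{V_\varepsilon\mathcal{C}_j}(f^j(x))<\gamma.$$
   Context: $\mathcal{C}_k$ is the set of critical points of $f_k$; $f^j=f_{j-1}\circ\cdots\circ f_0$, $f^0=\mathrm{id}$. $V_\varepsilon\mathcal{C}_k$ is the union of the balls $B(c,\varepsilon)$ over $c\in\mathcal{C}_k$; $\chi$ is the indicator function. $C^1$-uniformly equicontinuous: for every $\zeta>0$ there is $\varepsilon>0$ such that $|x-y|<\varepsilon$ implies $|f_k(x)-f_k(y)|<\zeta$ and $|Df_k(x)-Df_k(y)|<\zeta$ for all $k$. $C^1$-uniformly bounded: there is $\Gamma>0$ with $|f_k(x)|,|Df_k(x)|\le\Gamma$ for all $x,k$. *)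

theory Defs
  imports "HOL-Analysis.Analysis"
begin

fun iter :: "(nat \<Rightarrow> 'a \<Rightarrow> 'a) \<Rightarrow> nat \<Rightarrow> 'a \<Rightarrow> 'a" where
  "iter f 0 = id"
| "iter f (Suc n) = f n \<circ> iter f n"

text \<open>Derivative of f^n at x (chain rule): Df^n(x) = prod_{j<n} Df_j(f^j(x)).\<close>
definition iter_deriv :: "(nat \<Rightarrow> real \<Rightarrow> real) \<Rightarrow> (nat \<Rightarrow> real \<Rightarrow> real) \<Rightarrow> nat \<Rightarrow> real \<Rightarrow> real" where
  "iter_deriv f Df n x = (\<Prod>j<n. Df j (iter f j x))"

definition crit :: "real set \<Rightarrow> (nat \<Rightarrow> real \<Rightarrow> real) \<Rightarrow> nat \<Rightarrow> real set" where
  "crit I0 Df k = {x \<in> I0. Df k x = 0}"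

definition nbhd :: "real \<Rightarrow> real set \<Rightarrow> real set" where
  "nbhd \<epsilon> C = (\<Union>c\<in>C. ball c \<epsilon>)"

end

theory Submission
  imports Defs
begin

lemma key_count:
  fixes a :: "nat \<Rightarrow> real" and S :: "nat set" and G K :: real
  assumes S: "S \<subseteq> {..<n}" and G: "G \<ge> 1" and K: "K > 0"
    and bnd: "\<And>j. j < n \<Longrightarrow> \<bar>a j\<bar> \<le> G"
    and small: "\<And>j. j \<in> S \<Longrightarrow> \<bar>a j\<bar> < exp (- K)"
    and pos: "0 < ln \<bar>\<Prod>j<n. a j\<bar>"
  shows "real (card S) * K \<le> real n * ln G"
proof -
  have nz: "(\<Prod>j<n. a j) \<noteq> 0" using pos by (metis abs_zero ln_0 less_irrefl)
  hence nzj: "\<And>j. j < n \<Longrightarrow> a j \<noteq> 0" using nz by (metis finite_lessThan lessThan_iff prod_zero_iff)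
  have "ln \<bar>\<Prod>j<n. a j\<bar> = ln (\<Prod>j<n. \<bar>a j\<bar>)" by (simp add: abs_prod)
  also have "\<dots> = (\<Sum>j<n. ln \<bar>a j\<bar>)" by (rule ln_prod) (auto dest: nzj)
  also have "\<dots> = (\<Sum>j\<in>S. ln \<bar>a j\<bar>) + (\<Sum>j\<in>{..<n}-S. ln \<bar>a j\<bar>)"
    using S by (metis finite_lessThan sum.subset_diff add.commute)
  also have "\<dots> \<le> (\<Sum>j\<in>S. - K) + (\<Sum>j\<in>{..<n}-S. ln G)"
  proof (rule add_mono; rule sum_mono)
    fix j assume "j \<in> S"
    hence "0 < \<bar>a j\<bar>" "\<bar>a j\<bar> < exp (-K)" using S nzj small by auto
    thus "ln \<bar>a j\<bar> \<le> - K" using ln_less_cancel_iff[of "\<bar>a j\<bar>" "exp (-K)"] by simp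
  next
    fix j assume "j \<in> {..<n} - S"
    hence "0 < \<bar>a j\<bar>" "\<bar>a j\<bar> \<le> G" using nzj bnd by auto
    thus "ln \<bar>a j\<bar> \<le> ln G" by simp
  qed
  also have "\<dots> = - K * card S + card ({..<n} - S) * ln G" by simp
  also have "\<dots> \<le> - K * card S + n * ln G"
  proof -
    have "card ({..<n} - S) \<le> n" by (metis card_Diff_subset card_lessThan diff_le_self finite_lessThan finite_subset S)
    moreover have "ln G \<ge> 0" using G by simp
    ultimately show ?thesis by (simp add: mult_right_mono)
  qed
  finally show ?thesis using pos by (simp add: algebra_simps)
qed

lemma iter_in:
  assumes "\<And>k. f k ` I0 \<subseteq> I0" "x \<in> I0" shows "iter f j x \<in> I0"
  using assms by (induction j) auto

theorem corollary4p4: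
  fixes I0 :: "real set" and f Df :: "nat \<Rightarrow> real \<Rightarrow> real" and lam :: real
  assumes interval: "is_interval I0"
    and maps: "\<And>k. f k ` I0 \<subseteq> I0"
    and deriv: "\<And>k x. x \<in> I0 \<Longrightarrow> (f k has_real_derivative Df k x) (at x within I0)"
    and C1: "\<And>k. continuous_on I0 (Df k)"
    and equicont: "\<forall>\<zeta>>0. \<exists>\<epsilon>>0. \<forall>k. \<forall>x\<in>I0. \<forall>y\<in>I0. \<bar>x - y\<bar> < \<epsilon> \<longrightarrow>
                      \<bar>f k x - f k y\<bar> < \<zeta> \<and> \<bar>Df k x - Df k y\<bar> < \<zeta>"
    and bounded: "\<exists>\<Gamma>>0. \<forall>k. \<forall>x\<in>I0. \<bar>f k x\<bar> \<le> \<Gamma> \<and> \<bar>Df k x\<bar> \<le> \<Gamma>"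
    and crit_bound: "\<exists>p::nat. \<forall>k. finite (crit I0 Df k) \<and> card (crit I0 Df k) \<le> p"
    and lam_pos: "lam > 0"
    and expansion: "AE x in lebesgue. x \<in> I0 \<longrightarrow>
        liminf (\<lambda>n. ereal (ln \<bar>iter_deriv f Df n x\<bar> / real n)) \<ge> ereal lam"
  shows "\<forall>\<gamma>>0. \<exists>\<epsilon>>0. AE x in lebesgue. x \<in> I0 \<longrightarrow>
        limsup (\<lambda>n. ereal ((\<Sum>j<n. indicator (nbhd \<epsilon> (crit I0 Df j)) (iter f j x)) / real n))
          < ereal \<gamma>"
proof (intro allI impI)
  fix \<gamma> :: real assume gpos: "\<gamma> > 0"
  obtain \<Gamma> where Gam: "\<Gamma> > 0" "\<forall>k. \<forall>x\<in>I0. \<bar>Df k x\<bar> \<le> \<Gamma>" using bounded by blast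
  define G where "G = max \<Gamma> 1"
  have G1: "G \<ge> 1" by (simp add: G_def)
  have GB: "\<And>k x. x \<in> I0 \<Longrightarrow> \<bar>Df k x\<bar> \<le> G" using Gam unfolding G_def by (meson max.coboundedI1)
  define K where "K = 2 * ln G / \<gamma> + 1"
  have lnG: "ln G \<ge> 0" using G1 by simp
  have Kpos: "K > 0" unfolding K_def using lnG gpos by (smt (verit) divide_nonneg_pos)
  have KG: "ln G \<le> K * (\<gamma> / 2)" unfolding K_def using gpos lnG by (simp add: field_simps)
  obtain \<epsilon> where eps: "\<epsilon> > 0" "\<forall>k. \<forall>x\<in>I0. \<forall>y\<in>I0. \<bar>x - y\<bar> < \<epsilon> \<longrightarrow> \<bar>Df k x - Df k y\<bar> < exp (-K)"
    using equicont[rule_format, of "exp (-K)"] by force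
  have near: "\<bar>Df j y\<bar> < exp (-K)" if yh: "y \<in> I0" "y \<in> nbhd \<epsilon> (crit I0 Df j)" for j y
  proof -
    obtain c where c: "c \<in> I0" "Df j c = 0" "dist c y < \<epsilon>"
      using yh(2) unfolding nbhd_def crit_def by auto
    hence "\<bar>y - c\<bar> < \<epsilon>" by (simp add: dist_real_def abs_minus_commute)
    thus ?thesis using eps(2) c yh(1) by (metis diff_zero)
  qed
  show "\<exists>\<epsilon>>0. AE x in lebesgue. x \<in> I0 \<longrightarrow>
        limsup (\<lambda>n. ereal ((\<Sum>j<n. indicator (nbhd \<epsilon> (crit I0 Df j)) (iter f j x)) / real n))
          < ereal \<gamma>"
  proof (intro exI conjI)
    show "\<epsilon> > 0" by fact
    show "AE x in lebesgue. x \<in> I0 \<longrightarrow>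
        limsup (\<lambda>n. ereal ((\<Sum>j<n. indicator (nbhd \<epsilon> (crit I0 Df j)) (iter f j x)) / real n))
          < ereal \<gamma>"
      using expansion
    proof (rule eventually_mono, intro impI)
      fix x assume hx: "x \<in> I0 \<longrightarrow> ereal lam \<le> liminf (\<lambda>n. ereal (ln \<bar>iter_deriv f Df n x\<bar> / real n))"
        and xI: "x \<in> I0"
      have "ereal 0 < liminf (\<lambda>n. ereal (ln \<bar>iter_deriv f Df n x\<bar> / real n))"
        proof -
        have "ereal 0 < ereal lam" using lam_pos by simp
        also have "\<dots> \<le> liminf (\<lambda>n. ereal (ln \<bar>iter_deriv f Df n x\<bar> / real n))" using hx xI by blast
        finally show ?thesis .
      qed
      hence ev: "\<forall>\<^sub>F n in sequentially. ereal 0 < ereal (ln \<bar>iter_deriv f Df n x\<bar> / real n)"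
        by (rule less_LiminfD)
      have "\<forall>\<^sub>F n in sequentially. ereal ((\<Sum>j<n. indicator (nbhd \<epsilon> (crit I0 Df j)) (iter f j x)) / real n) \<le> ereal (\<gamma>/2)"
        using ev
      proof (rule eventually_mono)
        fix n assume "ereal 0 < ereal (ln \<bar>iter_deriv f Df n x\<bar> / real n)"
        hence q: "0 < ln \<bar>iter_deriv f Df n x\<bar> / real n" by simp
        hence npos: "n > 0" by (cases n) auto
        have pos: "0 < ln \<bar>\<Prod>j<n. Df j (iter f j x)\<bar>"
          using q npos by (simp add: iter_deriv_def zero_less_divide_iff)
        define S where "S = {j\<in>{..<n}. iter f j x \<in> nbhd \<epsilon> (crit I0 Df j)}"
        have sumS: "(\<Sum>j<n. indicator (nbhd \<epsilon> (crit I0 Df j)) (iter f j x)) = real (card S)"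
          unfolding S_def indicator_def by (simp add: sum.If_cases Int_def conj_commute)
        have "real (card S) * K \<le> real n * ln G"
          by (rule key_count[OF _ G1 Kpos _ _ pos])
             (auto simp: S_def intro: GB iter_in[OF maps xI] near[OF iter_in[OF maps xI]])
        also have "\<dots> \<le> real n * (K * (\<gamma>/2))" using KG by (intro mult_left_mono) auto
        finally have "real (card S) \<le> real n * (\<gamma>/2)" using Kpos by (simp add: algebra_simps)
        thus "ereal ((\<Sum>j<n. indicator (nbhd \<epsilon> (crit I0 Df j)) (iter f j x)) / real n) \<le> ereal (\<gamma>/2)"
          using npos by (simp add: sumS field_simps)
      qed
      hence "limsup (\<lambda>n. ereal ((\<Sum>j<n. indicator (nbhd \<epsilon> (crit I0 Df j)) (iter f j x)) / real n)) \<le> ereal (\<gamma>/2)"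
        by (rule Limsup_bounded)
      also have "\<dots> < ereal \<gamma>" using gpos by simp
      finally show "limsup (\<lambda>n. ereal ((\<Sum>j<n. indicator (nbhd \<epsilon> (crit I0 Df j)) (iter f j x)) / real n)) < ereal \<gamma>" .
    qed
  qed
qed

end
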